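(* Let $A$ and $B$ be automata. (1) If $(b,n)$ is a normed backward simulation from $A$ to $B$, then $b$ is a branching backward simulation from $A$ to $B$. (2) If $b$ is a branching backward simulation from $A$ to $B$, define $n:(\mathrm{steps}(A)\cup\mathrm{start}(A))\times\mathrm{states}(B)\to\mathbb{N}$ as follows: for $s\in\mathrm{start}(A)$, $n(s,u)=0$ if $u\notin b[s]$ and otherwise $n(s,u)$ is the minimal length (number of steps) of an execution of $B$ that ends in $u$ and is $b$-related to the one-state execution $s$ of $A$; for a step $t\xrightarrow{a}_A s$, $n(t\xrightarrow{a}s,u)=0$ if $u\notin b[s]$ and otherwise $n(t\xrightarrow{a}s,u)$ is the minimal length of an execution fragment of $B$ that ends in $u$ and is $b$-related to the execution fragment $t\,a\,s$ of $A$. Then $(b,n)$ is a normed backward simulation from $A$ to $B$ (with $\mathbb{N}$ ordered by $<$).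
   Context: An automaton $A$ consists of a set $\mathrm{states}(A)$ of states, a nonempty set $\mathrm{start}(A)\subseteq\mathrm{states}(A)$ of start states, a set $\mathrm{acts}(A)$ of actions containing a distinguished internal action $\tau$, and a set $\mathrm{steps}(A)\subseteq\mathrm{states}(A)\times\mathrm{acts}(A)\times\mathrm{states}(A)$ of steps; write $s\xrightarrow{a}_A t$ for $(s,a,t)\in\mathrm{steps}(A)$. An execution fragment of $A$ is a finite or infinite alternating sequence $s_0a_1s_1a_2s_2\cdots$ of states and actions, beginning with a state and, if finite, ending with a state, such that $s_{i-1}\xrightarrow{a_i}_A s_i$ for all $i>0$; its index set $\mathrm{Index}(\alpha)$ is the set of indices $i$ of its states $s_i$. An execution is an execution fragment whose first state is a start state. For a relation $R$ write $R[s]=\{u\mid (s,u)\in R\}$. Execution correspondence: Let $R\subseteq\mathrm{states}(A)\times\mathrm{states}(B)$ and let $\alpha=s_0a_1s_1\cdots$ and $\alpha'=u_0b_1u_1\cdots$ be execution fragments of $A$ and $B$. An index relation over $R$ between $\alpha$ and $\alpha'$ is a relation $I\subseteq\mathrm{Index}(\alpha)\times\mathrm{Index}(\alpha')$ such that (1) $(i,j)\in I$ implies $(s_i,u_j)\in R$; (2) $(i,j)\in I$, $(i',j')\in I$ and $i<i'$ imply $j\le j'$; (3) every index of $\alpha$ is related by $I$ to some index of $\alpha'$ and every index of $\alpha'$ is related by $I$ to some index of $\alpha$; (4) if $(i,j),(i+1,j+1)\in I$ then $a_{i+1}=b_{j+1}$; if $(i,j),(i+1,j)\in I$ then $a_{i+1}=\tau$;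 if $(i,j),(i,j+1)\in I$ then $b_{j+1}=\tau$. The fragments $\alpha,\alpha'$ are $R$-related, written $(\alpha,\alpha')\in R$, if such an $I$ exists. A normed backward simulation from $A$ to $B$ is a pair $(b,n)$ where $b\subseteq\mathrm{states}(A)\times\mathrm{states}(B)$ is total (every $s\in\mathrm{states}(A)$ has $b[s]\neq\emptyset$) and $n:(\mathrm{steps}(A)\cup\mathrm{start}(A))\times\mathrm{states}(B)\to S$ for some set $S$ with a well-founded strict order $<$, such that: (1) if $s\in\mathrm{start}(A)$ and $u\in b[s]$ then (a) $u\in\mathrm{start}(B)$, or (b) there is $v\in b[s]$ with $v\xrightarrow{\tau}_B u$ and $n(s,v)<n(s,u)$; (2) if $t\xrightarrow{a}_A s$ and $u\in b[s]$ then (a) $u\in b[t]$ and $a=\tau$, or (b) there is $v\in b[t]$ with $v\xrightarrow{a}_B u$, or (c) there is $v\in b[s]$ with $v\xrightarrow{\tau}_B u$ and $n(t\xrightarrow{a}s,v)<n(t\xrightarrow{a}s,u)$. A branching backward simulation from $A$ to $B$ is a total relation $b\subseteq\mathrm{states}(A)\times\mathrm{states}(B)$ such that (1) if $s\in\mathrm{start}(A)$ and $u\in b[s]$ then $B$ has an execution that ends in $u$ and is $b$-related to the one-state execution $s$ of $A$; (2) if $t\xrightarrow{a}_A s$ and $u\in b[s]$ then $B$ has an execution fragment that ends in $u$ and is $b$-related to the execution fragment $t\,a\,s$ of $A$. *)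

theory Defs
  imports Main "HOL-Library.Extended_Nat"
begin

text \<open>Automata. The distinguished internal action tau is passed as an explicit
parameter shared by the automata being compared.\<close>

record ('s, 'a) automaton =
  states :: "'s set"
  start  :: "'s set"
  acts   :: "'a set"
  steps  :: "('s \<times> 'a \<times> 's) set"

definition is_automaton :: "'a \<Rightarrow> ('s, 'a) automaton \<Rightarrow> bool" where
  "is_automaton tau A \<longleftrightarrow>
     start A \<noteq> {} \<and> start A \<subseteq> states A \<and> tau \<in> acts A \<and>
     steps A \<subseteq> states A \<times> acts A \<times> states A"

text \<open>An execution fragment s0 a1 s1 a2 s2 ... is represented by its state sequence
(index i gives s_i), its action sequence (index i gives a_i, i >= 1; index 0 unused)
and its length (number of steps, possibly infinite). Values beyond the length are
irrelevant.\<close>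

record ('s, 'a) frag =
  fst_st :: "nat \<Rightarrow> 's"
  fst_act :: "nat \<Rightarrow> 'a"
  flen :: enat

definition Index :: "('s, 'a) frag \<Rightarrow> nat set" where
  "Index \<alpha> = {i. enat i \<le> flen \<alpha>}"

definition is_frag :: "('s, 'a) automaton \<Rightarrow> ('s, 'a) frag \<Rightarrow> bool" where
  "is_frag A \<alpha> \<longleftrightarrow>
     fst_st \<alpha> 0 \<in> states A \<and>
     (\<forall>i. 0 < i \<and> i \<in> Index \<alpha> \<longrightarrow>
        (fst_st \<alpha> (i - 1), fst_act \<alpha> i, fst_st \<alpha> i) \<in> steps A)"

definition is_exec :: "('s, 'a) automaton \<Rightarrow> ('s, 'a) frag \<Rightarrow> bool" where
  "is_exec A \<alpha> \<longleftrightarrow> is_frag A \<alpha> \<and> fst_st \<alpha> 0 \<in> start A"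

definition ends_in_len :: "('s, 'a) frag \<Rightarrow> nat \<Rightarrow> 's \<Rightarrow> bool" where
  "ends_in_len \<alpha> k u \<longleftrightarrow> flen \<alpha> = enat k \<and> fst_st \<alpha> k = u"

definition ends_in :: "('s, 'a) frag \<Rightarrow> 's \<Rightarrow> bool" where
  "ends_in \<alpha> u \<longleftrightarrow> (\<exists>k. ends_in_len \<alpha> k u)"

definition single_frag :: "'a \<Rightarrow> 's \<Rightarrow> ('s, 'a) frag" where
  "single_frag tau s = \<lparr>fst_st = (\<lambda>_. s), fst_act = (\<lambda>_. tau), flen = 0\<rparr>"

definition step_frag :: "'s \<Rightarrow> 'a \<Rightarrow> 's \<Rightarrow> ('s, 'a) frag" where
  "step_frag t a s = \<lparr>fst_st = (\<lambda>i. if i = 0 then t else s), fst_act = (\<lambda>_. a), flen = 1\<rparr>"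

definition index_rel ::
  "'a \<Rightarrow> ('s \<times> 't) set \<Rightarrow> ('s, 'a) frag \<Rightarrow> ('t, 'a) frag \<Rightarrow> (nat \<times> nat) set \<Rightarrow> bool" where
  "index_rel tau R \<alpha> \<alpha>' I \<longleftrightarrow>
     I \<subseteq> Index \<alpha> \<times> Index \<alpha>' \<and>
     (\<forall>i j. (i, j) \<in> I \<longrightarrow> (fst_st \<alpha> i, fst_st \<alpha>' j) \<in> R) \<and>
     (\<forall>i j i' j'. (i, j) \<in> I \<and> (i', j') \<in> I \<and> i < i' \<longrightarrow> j \<le> j') \<and>
     (\<forall>i \<in> Index \<alpha>. \<exists>j. (i, j) \<in> I) \<and>
     (\<forall>j \<in> Index \<alpha>'. \<exists>i. (i, j) \<in> I) \<and>
     (\<forall>i j. (i, j) \<in> I \<and> (i + 1, j + 1) \<in> I \<longrightarrow> fst_act \<alpha> (i + 1) = fst_act \<alpha>' (j + 1)) \<and>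
     (\<forall>i j. (i, j) \<in> I \<and> (i + 1, j) \<in> I \<longrightarrow> fst_act \<alpha> (i + 1) = tau) \<and>
     (\<forall>i j. (i, j) \<in> I \<and> (i, j + 1) \<in> I \<longrightarrow> fst_act \<alpha>' (j + 1) = tau)"

definition frag_related ::
  "'a \<Rightarrow> ('s \<times> 't) set \<Rightarrow> ('s, 'a) frag \<Rightarrow> ('t, 'a) frag \<Rightarrow> bool" where
  "frag_related tau R \<alpha> \<alpha>' \<longleftrightarrow> (\<exists>I. index_rel tau R \<alpha> \<alpha>' I)"

definition total_rel :: "('s, 'a) automaton \<Rightarrow> ('t, 'a) automaton \<Rightarrow> ('s \<times> 't) set \<Rightarrow> bool" where
  "total_rel A B b \<longleftrightarrow> b \<subseteq> states A \<times> states B \<and> (\<forall>s \<in> states A. b `` {s} \<noteq> {})"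

text \<open>Norm functions are defined on (start(A) + steps(A)) x states(B):
Inl s stands for a start state s, Inr (t,a,s) for a step t -a-> s.
The well-founded strict order on the codomain is the parameter lt.\<close>

definition normed_bsim ::
  "'a \<Rightarrow> ('s, 'a) automaton \<Rightarrow> ('t, 'a) automaton \<Rightarrow> ('s \<times> 't) set
   \<Rightarrow> ('o \<Rightarrow> 'o \<Rightarrow> bool) \<Rightarrow> ('s + ('s \<times> 'a \<times> 's) \<Rightarrow> 't \<Rightarrow> 'o) \<Rightarrow> bool" where
  "normed_bsim tau A B b lt n \<longleftrightarrow>
     total_rel A B b \<and>
     (\<forall>s \<in> start A. \<forall>u \<in> b `` {s}.
        u \<in> start B \<or>
        (\<exists>v \<in> b `` {s}. (v, tau, u) \<in> steps B \<and> lt (n (Inl s) v) (n (Inl s) u))) \<and>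
     (\<forall>t a s u. (t, a, s) \<in> steps A \<and> u \<in> b `` {s} \<longrightarrow>
        (u \<in> b `` {t} \<and> a = tau) \<or>
        (\<exists>v \<in> b `` {t}. (v, a, u) \<in> steps B) \<or>
        (\<exists>v \<in> b `` {s}. (v, tau, u) \<in> steps B \<and>
            lt (n (Inr (t, a, s)) v) (n (Inr (t, a, s)) u)))"

definition branching_bsim ::
  "'a \<Rightarrow> ('s, 'a) automaton \<Rightarrow> ('t, 'a) automaton \<Rightarrow> ('s \<times> 't) set \<Rightarrow> bool" where
  "branching_bsim tau A B b \<longleftrightarrow>
     total_rel A B b \<and>
     (\<forall>s \<in> start A. \<forall>u \<in> b `` {s}.
        \<exists>\<alpha>'. is_exec B \<alpha>' \<and> ends_in \<alpha>' u \<and> frag_related tau b (single_frag tau s) \<alpha>') \<and>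
     (\<forall>t a s u. (t, a, s) \<in> steps A \<and> u \<in> b `` {s} \<longrightarrow>
        (\<exists>\<alpha>'. is_frag B \<alpha>' \<and> ends_in \<alpha>' u \<and> frag_related tau b (step_frag t a s) \<alpha>'))"

definition branching_norm ::
  "'a \<Rightarrow> ('s, 'a) automaton \<Rightarrow> ('t, 'a) automaton \<Rightarrow> ('s \<times> 't) set
   \<Rightarrow> ('s + ('s \<times> 'a \<times> 's) \<Rightarrow> 't \<Rightarrow> nat)" where
  "branching_norm tau A B b x u =
     (case x of
        Inl s \<Rightarrow> (if u \<notin> b `` {s} then 0 else
          (LEAST k. \<exists>\<alpha>'. is_exec B \<alpha>' \<and> ends_in_len \<alpha>' k u \<and>
                          frag_related tau b (single_frag tau s) \<alpha>'))
      | Inr (t, a, s) \<Rightarrow> (if u \<notin> b `` {s} then 0 else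
          (LEAST k. \<exists>\<alpha>'. is_frag B \<alpha>' \<and> ends_in_len \<alpha>' k u \<and>
                          frag_related tau b (step_frag t a s) \<alpha>')))"

end

theory Submission imports Defs begin

lemma Index_enat: "flen \<alpha> = enat k \<Longrightarrow> Index \<alpha> = {..k}"
  by (auto simp: Index_def)

lemma Index_single[simp]: "Index (single_frag tau s) = {0}"
  by (auto simp: Index_def single_frag_def zero_enat_def)

lemma Index_step[simp]: "Index (step_frag t a s) = {0,1}"
  by (auto simp: Index_def step_frag_def one_enat_def)

definition ext_frag :: "('t,'a) frag \<Rightarrow> nat \<Rightarrow> 't \<Rightarrow> 'a \<Rightarrow> ('t,'a) frag" where
  "ext_frag \<alpha> k u c = \<lparr>fst_st = (\<lambda>j. if j = Suc k then u else fst_st \<alpha> j),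
     fst_act = (\<lambda>j. if j = Suc k then c else fst_act \<alpha> j), flen = enat (Suc k)\<rparr>"

lemma ext_is_frag:
  assumes "is_frag B \<alpha>" "flen \<alpha> = enat k" "(fst_st \<alpha> k, c, u) \<in> steps B"
  shows "is_frag B (ext_frag \<alpha> k u c)"
  using assms unfolding is_frag_def ext_frag_def
  by (auto simp: Index_def)

lemma ext_ends: "ends_in (ext_frag \<alpha> k u c) u"
  by (auto simp: ends_in_def ends_in_len_def ext_frag_def)

lemma ext_st0: "fst_st (ext_frag \<alpha> k u c) 0 = fst_st \<alpha> 0"
  by (simp add: ext_frag_def)

lemma ext_rel:
  assumes R: "index_rel tau R \<alpha> \<alpha>' I" and fl: "flen \<alpha>' = enat k" and ik: "(i0,k) \<in> I"
    and mx: "\<forall>i j. (i,j)\<in>I \<longrightarrow> i \<le> i0" and uR: "(fst_st \<alpha> i0, u) \<in> R"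
    and ta: "\<forall>i. (i,k) \<in> I \<and> Suc i = i0 \<longrightarrow> fst_act \<alpha> i0 = tau"
  shows "index_rel tau R \<alpha> (ext_frag \<alpha>' k u tau) (insert (i0, Suc k) I)"
proof -
  let ?e = "ext_frag \<alpha>' k u tau"
  let ?J = "insert (i0, Suc k) I"
  have IB: "\<And>i j. (i,j) \<in> I \<Longrightarrow> j \<le> k \<and> i \<in> Index \<alpha>"
    using R fl unfolding index_rel_def Index_def by auto
  have IE: "Index ?e = {..Suc k}"
    by (simp add: Index_enat ext_frag_def)
  have st: "\<And>j. j \<le> k \<Longrightarrow> fst_st ?e j = fst_st \<alpha>' j" by (simp add: ext_frag_def)
  have ac: "\<And>j. j \<le> k \<Longrightarrow> fst_act ?e j = fst_act \<alpha>' j" by (simp add: ext_frag_def)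
  have c1: "?J \<subseteq> Index \<alpha> \<times> Index ?e" using IB ik unfolding IE by (fastforce intro: le_SucI)
  have c2: "\<forall>i j. (i, j) \<in> ?J \<longrightarrow> (fst_st \<alpha> i, fst_st ?e j) \<in> R"
    using R IB uR st unfolding index_rel_def by (auto simp: ext_frag_def dest: IB)
  have c3: "\<forall>i j i' j'. (i, j) \<in> ?J \<and> (i', j') \<in> ?J \<and> i < i' \<longrightarrow> j \<le> j'"
    using R IB mx unfolding index_rel_def by fastforce
  have c4: "\<forall>i \<in> Index \<alpha>. \<exists>j. (i, j) \<in> ?J" using R unfolding index_rel_def by auto
  have c5: "\<forall>j \<in> Index ?e. \<exists>i. (i, j) \<in> ?J"
  proof
    fix j assume "j \<in> Index ?e"
    then have "j \<le> Suc k" using IE by auto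
    then show "\<exists>i. (i, j) \<in> ?J"
    proof (cases "j = Suc k")
      case False
      then have "j \<in> Index \<alpha>'" using \<open>j \<le> Suc k\<close> fl by (auto simp: Index_def)
      then show ?thesis using R unfolding index_rel_def by blast
    qed auto
  qed
  have c6: "\<forall>i j. (i, j) \<in> ?J \<and> (i + 1, j + 1) \<in> ?J \<longrightarrow> fst_act \<alpha> (i + 1) = fst_act ?e (j + 1)"
  proof (intro allI impI)
    fix i j assume h: "(i, j) \<in> ?J \<and> (i + 1, j + 1) \<in> ?J"
    show "fst_act \<alpha> (i + 1) = fst_act ?e (j + 1)"
    proof (cases "(i + 1, j + 1) = (i0, Suc k)")
      case True
      then have "(i, j) \<in> I" "j = k" "Suc i = i0" using h by auto
      then show ?thesis using ta True by (auto simp: ext_frag_def)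
    next
      case False
      then have h2: "(i + 1, j + 1) \<in> I" using h by auto
      then have "j + 1 \<le> k" using IB by blast
      moreover have "(i, j) \<in> I" using h mx h2 by fastforce
      ultimately show ?thesis using R h2 ac unfolding index_rel_def by auto
    qed
  qed
  have c7: "\<forall>i j. (i, j) \<in> ?J \<and> (i + 1, j) \<in> ?J \<longrightarrow> fst_act \<alpha> (i + 1) = tau"
    using R IB mx unfolding index_rel_def by fastforce
  have c8: "\<forall>i j. (i, j) \<in> ?J \<and> (i, j + 1) \<in> ?J \<longrightarrow> fst_act ?e (j + 1) = tau"
  proof (intro allI impI)
    fix i j assume h: "(i, j) \<in> ?J \<and> (i, j + 1) \<in> ?J"
    show "fst_act ?e (j + 1) = tau"
    proof (cases "(i, j + 1) = (i0, Suc k)")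
      case True
      then show ?thesis by (auto simp: ext_frag_def)
    next
      case False
      then have h2: "(i, j + 1) \<in> I" using h by auto
      then have "j + 1 \<le> k" using IB by blast
      moreover have "(i, j) \<in> I" using h \<open>j + 1 \<le> k\<close> by auto
      ultimately show ?thesis using R h2 ac unfolding index_rel_def by auto
    qed
  qed
  show ?thesis unfolding index_rel_def by (intro conjI c1 c2 c3 c4 c5 c6 c7 c8)
qed

lemma trunc_rel:
  assumes "index_rel tau R \<alpha> \<alpha>' I" "flen \<alpha>' = enat (Suc k)"
    "\<forall>i\<in>Index \<alpha>. \<exists>j\<le>k. (i,j) \<in> I"
  shows "index_rel tau R \<alpha> (\<alpha>'\<lparr>flen := enat k\<rparr>) (I \<inter> (UNIV \<times> {..k}))"
proof -
  let ?e = "\<alpha>'\<lparr>flen := enat k\<rparr>"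
  let ?J = "I \<inter> (UNIV \<times> {..k})"
  have R: "index_rel tau R \<alpha> \<alpha>' I" by fact
  have IE: "Index ?e = {..k}" by (simp add: Index_enat)
  have IA: "Index \<alpha>' = {..Suc k}" using assms(2) by (simp add: Index_enat)
  have c1: "?J \<subseteq> Index \<alpha> \<times> Index ?e" using R unfolding IE index_rel_def by blast
  have c2: "\<forall>i j. (i, j) \<in> ?J \<longrightarrow> (fst_st \<alpha> i, fst_st ?e j) \<in> R"
    using R unfolding index_rel_def by simp
  have c3: "\<forall>i j i' j'. (i, j) \<in> ?J \<and> (i', j') \<in> ?J \<and> i < i' \<longrightarrow> j \<le> j'"
    using R unfolding index_rel_def by blast
  have c4: "\<forall>i \<in> Index \<alpha>. \<exists>j. (i, j) \<in> ?J" using assms(3) by blast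
  have c5: "\<forall>j \<in> Index ?e. \<exists>i. (i, j) \<in> ?J"
  proof
    fix j assume "j \<in> Index ?e"
    then have "j \<le> k" using IE by auto
    then have "j \<in> Index \<alpha>'" using IA by auto
    then obtain i where "(i,j) \<in> I" using R unfolding index_rel_def by blast
    then show "\<exists>i. (i, j) \<in> ?J" using \<open>j \<le> k\<close> by blast
  qed
  have c6: "\<forall>i j. (i, j) \<in> ?J \<and> (i + 1, j + 1) \<in> ?J \<longrightarrow> fst_act \<alpha> (i + 1) = fst_act ?e (j + 1)"
    using R unfolding index_rel_def by simp
  have c7: "\<forall>i j. (i, j) \<in> ?J \<and> (i + 1, j) \<in> ?J \<longrightarrow> fst_act \<alpha> (i + 1) = tau"
    using R unfolding index_rel_def by blast
  have c8: "\<forall>i j. (i, j) \<in> ?J \<and> (i, j + 1) \<in> ?J \<longrightarrow> fst_act ?e (j + 1) = tau"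
    using R unfolding index_rel_def by auto
  show ?thesis unfolding index_rel_def by (intro conjI c1 c2 c3 c4 c5 c6 c7 c8)
qed

lemma trunc_frag: "is_frag B \<alpha> \<Longrightarrow> flen \<alpha> = enat (Suc k) \<Longrightarrow> is_frag B (\<alpha>\<lparr>flen := enat k\<rparr>)"
  unfolding is_frag_def by (auto simp: Index_def)

lemma single_rel_all: "index_rel tau R (single_frag tau s) \<alpha>' I \<Longrightarrow> j \<in> Index \<alpha>' \<Longrightarrow> (0,j) \<in> I"
proof -
  assume R: "index_rel tau R (single_frag tau s) \<alpha>' I" and j: "j \<in> Index \<alpha>'"
  then obtain i where "(i,j) \<in> I" unfolding index_rel_def by blast
  moreover have "i = 0" using R calculation unfolding index_rel_def by auto
  ultimately show ?thesis by simp
qed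

lemma single_rel_fst: "index_rel tau R (single_frag tau s) \<alpha>' I \<Longrightarrow> (i,j) \<in> I \<Longrightarrow> i = 0"
  unfolding index_rel_def by auto

lemma step_rel_fst: "index_rel tau R (step_frag t a s) \<alpha>' I \<Longrightarrow> (i,j) \<in> I \<Longrightarrow> i = 0 \<or> i = 1"
  unfolding index_rel_def by auto

lemma step_rel_last:
  assumes R: "index_rel tau R (step_frag t a s) \<alpha>' I" and fl: "flen \<alpha>' = enat k"
  shows "(1,k) \<in> I"
proof -
  have "k \<in> Index \<alpha>'" using fl by (simp add: Index_def)
  then obtain i where i: "(i,k) \<in> I" using R unfolding index_rel_def by blast
  show ?thesis
  proof (cases "i = 1")
    case False
    then have "i = 0" using step_rel_fst[OF R i] by auto
    obtain j where j: "(1,j) \<in> I" using R unfolding index_rel_def by auto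
    then have "j \<le> k" using R fl unfolding index_rel_def Index_def by auto
    moreover have "k \<le> j"
    proof -
      have "\<forall>i j i' j'. (i, j) \<in> I \<and> (i', j') \<in> I \<and> i < i' \<longrightarrow> j \<le> j'"
        using R unfolding index_rel_def by blast
      then show ?thesis using i j \<open>i = 0\<close> by fastforce
    qed
    ultimately show ?thesis using j by auto
  qed (use i in auto)
qed

lemma single_exec_rel:
  assumes "u \<in> states B" "(s,u) \<in> R"
  shows "frag_related tau R (single_frag tau s) (single_frag tau u)"
  unfolding frag_related_def
  by (rule exI[of _ "{(0,0)}"]) (use assms in \<open>auto simp: index_rel_def single_frag_def Index_def zero_enat_def\<close>)

lemma single_frag_ok: "u \<in> states B \<Longrightarrow> is_frag B (single_frag tau u) \<and> ends_in (single_frag tau u) u"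
  by (auto simp: is_frag_def single_frag_def ends_in_def ends_in_len_def Index_def zero_enat_def)


lemma part1_start:
  assumes wf: "wfP lt" and nb: "normed_bsim tau A B b lt n" and isB: "is_automaton tau B"
    and s: "s \<in> start A"
  shows "\<forall>u \<in> b``{s}. \<exists>\<alpha>'. is_exec B \<alpha>' \<and> ends_in \<alpha>' u \<and> frag_related tau b (single_frag tau s) \<alpha>'"
proof -
  have "\<forall>u. n (Inl s) u = x \<longrightarrow> u \<in> b``{s} \<longrightarrow>
      (\<exists>\<alpha>'. is_exec B \<alpha>' \<and> ends_in \<alpha>' u \<and> frag_related tau b (single_frag tau s) \<alpha>')" for x
    using wf
  proof (induction x rule: wfp_induct_rule)
    case (less x)
    show ?case
    proof (intro allI impI)
      fix u assume nx: "n (Inl s) u = x" and u: "u \<in> b``{s}"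
      from nb s u have "u \<in> start B \<or> (\<exists>v\<in>b``{s}. (v,tau,u) \<in> steps B \<and> lt (n (Inl s) v) (n (Inl s) u))"
        unfolding normed_bsim_def by blast
      then show "\<exists>\<alpha>'. is_exec B \<alpha>' \<and> ends_in \<alpha>' u \<and> frag_related tau b (single_frag tau s) \<alpha>'"
      proof
        assume us: "u \<in> start B"
        then have "u \<in> states B" using isB unfolding is_automaton_def by auto
        then show ?thesis
          using single_frag_ok[of u B tau] single_exec_rel[of u B s b tau] u us
          by (intro exI[of _ "single_frag tau u"]) (auto simp: is_exec_def single_frag_def)
      next
        assume "\<exists>v\<in>b``{s}. (v,tau,u) \<in> steps B \<and> lt (n (Inl s) v) (n (Inl s) u)"
        then obtain v where v: "v \<in> b``{s}" "(v,tau,u) \<in> steps B" "lt (n (Inl s) v) (n (Inl s) u)"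
          by blast
        from less.IH[of "n (Inl s) v"] v nx obtain \<alpha>' where
          a: "is_exec B \<alpha>'" "ends_in \<alpha>' v" "frag_related tau b (single_frag tau s) \<alpha>'" by auto
        obtain k where k: "ends_in_len \<alpha>' k v" using a unfolding ends_in_def by blast
        obtain I where I: "index_rel tau b (single_frag tau s) \<alpha>' I"
          using a unfolding frag_related_def by blast
        have fl: "flen \<alpha>' = enat k" "fst_st \<alpha>' k = v" using k unfolding ends_in_len_def by auto
        have rel: "index_rel tau b (single_frag tau s) (ext_frag \<alpha>' k u tau) (insert (0,Suc k) I)"
        proof (rule ext_rel[OF I fl(1)])
          show "(0, k) \<in> I" using single_rel_all[OF I] fl by (simp add: Index_def)
          show "\<forall>i j. (i, j) \<in> I \<longrightarrow> i \<le> 0" using single_rel_fst[OF I] by auto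
          show "(fst_st (single_frag tau s) 0, u) \<in> b" using u by (simp add: single_frag_def)
        qed auto
        have fr: "is_frag B (ext_frag \<alpha>' k u tau)"
          using ext_is_frag[of B \<alpha>' k tau u] a(1) fl v(2) unfolding is_exec_def by auto
        show ?thesis
          using rel fr a(1) ext_ends[of \<alpha>' k u tau] ext_st0[of \<alpha>' k u tau]
          by (intro exI[of _ "ext_frag \<alpha>' k u tau"]) (auto simp: is_exec_def frag_related_def)
      qed
    qed
  qed
  then show ?thesis by blast
qed

lemma part1_step:
  assumes wf: "wfP lt" and nb: "normed_bsim tau A B b lt n" and isB: "is_automaton tau B"
    and st: "(t,a,s) \<in> steps A"
  shows "\<forall>u \<in> b``{s}. \<exists>\<alpha>'. is_frag B \<alpha>' \<and> ends_in \<alpha>' u \<and> frag_related tau b (step_frag t a s) \<alpha>'"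
proof -
  have tot: "b \<subseteq> states A \<times> states B" using nb unfolding normed_bsim_def total_rel_def by auto
  have "\<forall>u. n (Inr (t,a,s)) u = x \<longrightarrow> u \<in> b``{s} \<longrightarrow>
      (\<exists>\<alpha>'. is_frag B \<alpha>' \<and> ends_in \<alpha>' u \<and> frag_related tau b (step_frag t a s) \<alpha>')" for x
    using wf
  proof (induction x rule: wfp_induct_rule)
    case (less x)
    show ?case
    proof (intro allI impI)
      fix u assume nx: "n (Inr (t,a,s)) u = x" and u: "u \<in> b``{s}"
      from nb st u have "(u \<in> b `` {t} \<and> a = tau) \<or>
        (\<exists>v \<in> b `` {t}. (v, a, u) \<in> steps B) \<or>
        (\<exists>v \<in> b `` {s}. (v, tau, u) \<in> steps B \<and>
            lt (n (Inr (t, a, s)) v) (n (Inr (t, a, s)) u))"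
        unfolding normed_bsim_def by blast
      then show "\<exists>\<alpha>'. is_frag B \<alpha>' \<and> ends_in \<alpha>' u \<and> frag_related tau b (step_frag t a s) \<alpha>'"
      proof (elim disjE)
        assume h: "u \<in> b `` {t} \<and> a = tau"
        have "u \<in> states B" using u tot by auto
        moreover have "index_rel tau b (step_frag t a s) (single_frag tau u) {(0,0),(1,0)}"
          unfolding index_rel_def Index_single Index_step using h u
          by (auto simp: single_frag_def step_frag_def)
        ultimately show ?thesis
          using single_frag_ok[of u B tau]
          by (intro exI[of _ "single_frag tau u"]) (auto simp: frag_related_def)
      next
        assume "\<exists>v \<in> b `` {t}. (v, a, u) \<in> steps B"
        then obtain v where v: "v \<in> b``{t}" "(v, a, u) \<in> steps B" by blast
        have "v \<in> states B" using v tot by auto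
        have fr: "is_frag B (step_frag v a u)"
          using v \<open>v \<in> states B\<close> by (auto simp: is_frag_def step_frag_def Index_def one_enat_def)
        have en: "ends_in (step_frag v a u) u"
          by (auto simp: ends_in_def ends_in_len_def step_frag_def one_enat_def)
        have "index_rel tau b (step_frag t a s) (step_frag v a u) {(0,0),(1,1)}"
          unfolding index_rel_def Index_step using v u
          by (auto simp: step_frag_def)
        then show ?thesis using fr en
          by (intro exI[of _ "step_frag v a u"]) (auto simp: frag_related_def)
      next
        assume "\<exists>v \<in> b `` {s}. (v, tau, u) \<in> steps B \<and>
            lt (n (Inr (t, a, s)) v) (n (Inr (t, a, s)) u)"
        then obtain v where v: "v \<in> b``{s}" "(v,tau,u) \<in> steps B"
          "lt (n (Inr (t, a, s)) v) (n (Inr (t, a, s)) u)" by blast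
        from less.IH[of "n (Inr (t, a, s)) v"] v nx obtain \<alpha>' where
          a: "is_frag B \<alpha>'" "ends_in \<alpha>' v" "frag_related tau b (step_frag t a s) \<alpha>'" by auto
        obtain k where k: "ends_in_len \<alpha>' k v" using a unfolding ends_in_def by blast
        obtain I where I: "index_rel tau b (step_frag t a s) \<alpha>' I"
          using a unfolding frag_related_def by blast
        have fl: "flen \<alpha>' = enat k" "fst_st \<alpha>' k = v" using k unfolding ends_in_len_def by auto
        have k1: "(1,k) \<in> I" using step_rel_last[OF I fl(1)] .
        have rel: "index_rel tau b (step_frag t a s) (ext_frag \<alpha>' k u tau) (insert (1,Suc k) I)"
        proof (rule ext_rel[OF I fl(1) k1])
          show "\<forall>i j. (i, j) \<in> I \<longrightarrow> i \<le> 1" using step_rel_fst[OF I] by fastforce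
          show "(fst_st (step_frag t a s) 1, u) \<in> b" using v u by (simp add: step_frag_def)
          show "\<forall>i. (i, k) \<in> I \<and> Suc i = 1 \<longrightarrow> fst_act (step_frag t a s) 1 = tau"
          proof (intro allI impI)
            fix i assume hi: "(i, k) \<in> I \<and> Suc i = 1"
            then have "(0,k) \<in> I \<and> (0+1,k) \<in> I" using k1 by auto
            then show "fst_act (step_frag t a s) 1 = tau" using I unfolding index_rel_def by fastforce
          qed
        qed
        have fr: "is_frag B (ext_frag \<alpha>' k u tau)"
          using ext_is_frag[of B \<alpha>' k tau u] a(1) fl v(2) by auto
        show ?thesis
          using rel fr ext_ends[of \<alpha>' k u tau]
          by (intro exI[of _ "ext_frag \<alpha>' k u tau"]) (auto simp: frag_related_def)
      qed
    qed
  qed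
  then show ?thesis by blast
qed


lemma ir_R: "index_rel tau R \<alpha> \<alpha>' I \<Longrightarrow> (i,j) \<in> I \<Longrightarrow> (fst_st \<alpha> i, fst_st \<alpha>' j) \<in> R"
  unfolding index_rel_def by blast
lemma ir_mono: "index_rel tau R \<alpha> \<alpha>' I \<Longrightarrow> (i,j) \<in> I \<Longrightarrow> (i',j') \<in> I \<Longrightarrow> i < i' \<Longrightarrow> j \<le> j'"
  unfolding index_rel_def by blast
lemma ir_a1: "index_rel tau R \<alpha> \<alpha>' I \<Longrightarrow> (i,j) \<in> I \<Longrightarrow> (Suc i, Suc j) \<in> I \<Longrightarrow> fst_act \<alpha> (Suc i) = fst_act \<alpha>' (Suc j)"
  unfolding index_rel_def by simp
lemma ir_a2: "index_rel tau R \<alpha> \<alpha>' I \<Longrightarrow> (i,j) \<in> I \<Longrightarrow> (Suc i, j) \<in> I \<Longrightarrow> fst_act \<alpha> (Suc i) = tau"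
  unfolding index_rel_def Suc_eq_plus1 by blast
lemma ir_a3: "index_rel tau R \<alpha> \<alpha>' I \<Longrightarrow> (i,j) \<in> I \<Longrightarrow> (i, Suc j) \<in> I \<Longrightarrow> fst_act \<alpha>' (Suc j) = tau"
  unfolding index_rel_def by simp
lemma frag_step: "is_frag B \<alpha> \<Longrightarrow> enat (Suc i) \<le> flen \<alpha> \<Longrightarrow> (fst_st \<alpha> i, fst_act \<alpha> (Suc i), fst_st \<alpha> (Suc i)) \<in> steps B"
  unfolding is_frag_def Index_def by (metis diff_Suc_1 mem_Collect_eq zero_less_Suc)

lemma part2_start:
  assumes bb: "branching_bsim tau A B b" and s: "s \<in> start A" and u: "u \<in> b``{s}"
  shows "u \<in> start B \<or> (\<exists>v\<in>b``{s}. (v,tau,u) \<in> steps B \<and>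
     branching_norm tau A B b (Inl s) v < branching_norm tau A B b (Inl s) u)"
proof -
  define P where "P = (\<lambda>v k. \<exists>\<alpha>'. is_exec B \<alpha>' \<and> ends_in_len \<alpha>' k v \<and>
      frag_related tau b (single_frag tau s) \<alpha>')"
  have N: "\<And>v. v \<in> b``{s} \<Longrightarrow> branching_norm tau A B b (Inl s) v = (LEAST k. P v k)"
    by (simp add: branching_norm_def P_def)
  from bb s u have "\<exists>k. P u k" unfolding branching_bsim_def P_def ends_in_def by blast
  then have "P u (LEAST k. P u k)" by (rule LeastI_ex)
  then obtain \<alpha>' where a: "is_exec B \<alpha>'" "ends_in_len \<alpha>' (LEAST k. P u k) u"
    "frag_related tau b (single_frag tau s) \<alpha>'" unfolding P_def by blast
  obtain I where I: "index_rel tau b (single_frag tau s) \<alpha>' I"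
    using a unfolding frag_related_def by blast
  show ?thesis
  proof (cases "(LEAST k. P u k)")
    case 0
    then show ?thesis using a unfolding is_exec_def ends_in_len_def by auto
  next
    case (Suc k')
    define v where "v = fst_st \<alpha>' k'"
    have fl: "flen \<alpha>' = enat (Suc k')" "fst_st \<alpha>' (Suc k') = u"
      using a Suc unfolding ends_in_len_def by auto
    have stp: "(v, fst_act \<alpha>' (Suc k'), u) \<in> steps B"
      using a(1) fl frag_step[of B \<alpha>' k'] unfolding is_exec_def v_def by simp
    have i1: "(0,k') \<in> I" "(0, Suc k') \<in> I"
      using single_rel_all[OF I] fl by (auto simp: Index_def)
    have tau: "fst_act \<alpha>' (Suc k') = tau" using ir_a3[OF I i1] .
    have vb: "v \<in> b``{s}" using ir_R[OF I i1(1)] unfolding v_def by (simp add: single_frag_def)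
    have "P v k'"
      unfolding P_def
    proof (intro exI conjI)
      show "is_exec B (\<alpha>'\<lparr>flen := enat k'\<rparr>)"
        using a(1) trunc_frag[of B \<alpha>' k'] fl unfolding is_exec_def by auto
      show "ends_in_len (\<alpha>'\<lparr>flen := enat k'\<rparr>) k' v" by (simp add: ends_in_len_def v_def)
      have "index_rel tau b (single_frag tau s) (\<alpha>'\<lparr>flen := enat k'\<rparr>) (I \<inter> (UNIV \<times> {..k'}))"
      proof (rule trunc_rel[OF I fl(1)])
        have "(0,0) \<in> I" using single_rel_all[OF I, of 0] fl by (simp add: Index_def zero_enat_def)
        then show "\<forall>i\<in>Index (single_frag tau s). \<exists>j\<le>k'. (i, j) \<in> I" by auto
      qed
      then show "frag_related tau b (single_frag tau s) (\<alpha>'\<lparr>flen := enat k'\<rparr>)"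
        unfolding frag_related_def by blast
    qed
    then have "(LEAST k. P v k) \<le> k'" by (rule Least_le)
    then have "branching_norm tau A B b (Inl s) v < branching_norm tau A B b (Inl s) u"
      using N[OF vb] N[OF u] Suc by simp
    then show ?thesis using vb stp tau by auto
  qed
qed

lemma part2_step:
  assumes bb: "branching_bsim tau A B b" and st: "(t,a,s) \<in> steps A" and u: "u \<in> b``{s}"
  shows "(u \<in> b `` {t} \<and> a = tau) \<or>
        (\<exists>v \<in> b `` {t}. (v, a, u) \<in> steps B) \<or>
        (\<exists>v \<in> b `` {s}. (v, tau, u) \<in> steps B \<and>
            branching_norm tau A B b (Inr (t, a, s)) v < branching_norm tau A B b (Inr (t, a, s)) u)"
proof -
  define P where "P = (\<lambda>v k. \<exists>\<alpha>'. is_frag B \<alpha>' \<and> ends_in_len \<alpha>' k v \<and>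
      frag_related tau b (step_frag t a s) \<alpha>')"
  have N: "\<And>v. v \<in> b``{s} \<Longrightarrow> branching_norm tau A B b (Inr (t,a,s)) v = (LEAST k. P v k)"
    by (simp add: branching_norm_def P_def)
  from bb st u have "\<exists>k. P u k" unfolding branching_bsim_def P_def ends_in_def by blast
  then have "P u (LEAST k. P u k)" by (rule LeastI_ex)
  then obtain \<alpha>' where a: "is_frag B \<alpha>'" "ends_in_len \<alpha>' (LEAST k. P u k) u"
    "frag_related tau b (step_frag t a s) \<alpha>'" unfolding P_def by blast
  obtain I where I: "index_rel tau b (step_frag t a s) \<alpha>' I"
    using a unfolding frag_related_def by blast
  show ?thesis
  proof (cases "(LEAST k. P u k)")
    case 0
    then have fl: "flen \<alpha>' = enat 0" "fst_st \<alpha>' 0 = u" using a unfolding ends_in_len_def by auto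
    have IA: "Index \<alpha>' = {0}" using Index_enat[OF fl(1)] by auto
    have c1: "\<forall>i\<in>Index (step_frag t a s). \<exists>j. (i,j) \<in> I" and c2: "I \<subseteq> Index (step_frag t a s) \<times> Index \<alpha>'"
      using I unfolding index_rel_def by blast+
    obtain j0 j1 where "(0,j0) \<in> I" "(1,j1) \<in> I" using c1 by auto
    moreover then have "j0 = 0" "j1 = 0" using c2 IA by auto
    ultimately have "(0,0) \<in> I" "(1,0) \<in> I" by auto
    then have "(fst_st (step_frag t a s) 0, fst_st \<alpha>' 0) \<in> b"
      "fst_act (step_frag t a s) (Suc 0) = tau"
      using ir_R[OF I] ir_a2[OF I, of 0 0] by auto
    then have "a = tau" "u \<in> b``{t}" using fl by (auto simp: step_frag_def)
    then show ?thesis by auto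
  next
    case (Suc k')
    define v where "v = fst_st \<alpha>' k'"
    have fl: "flen \<alpha>' = enat (Suc k')" "fst_st \<alpha>' (Suc k') = u"
      using a Suc unfolding ends_in_len_def by auto
    have stp: "(v, fst_act \<alpha>' (Suc k'), u) \<in> steps B"
      using a(1) fl frag_step[of B \<alpha>' k'] unfolding v_def by simp
    have l1: "(1, Suc k') \<in> I" using step_rel_last[OF I fl(1)] .
    have "k' \<in> Index \<alpha>'" using fl by (simp add: Index_def)
    then obtain i where i: "(i,k') \<in> I" using I unfolding index_rel_def by blast
    show ?thesis
    proof (cases "i = 1")
      case False
      then have "i = 0" using step_rel_fst[OF I i] by auto
      then have "fst_act \<alpha>' (Suc k') = a" using ir_a1[OF I, of 0 k'] i l1
        by (simp add: step_frag_def)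
      moreover have "v \<in> b``{t}" using ir_R[OF I i] \<open>i = 0\<close> unfolding v_def
        by (simp add: step_frag_def)
      ultimately show ?thesis using stp by auto
    next
      case True
      have tau: "fst_act \<alpha>' (Suc k') = tau" using ir_a3[OF I, of 1 k'] i l1 True by simp
      have vb: "v \<in> b``{s}" using ir_R[OF I i] True unfolding v_def
        by (simp add: step_frag_def)
      have "P v k'"
        unfolding P_def
      proof (intro exI conjI)
        show "is_frag B (\<alpha>'\<lparr>flen := enat k'\<rparr>)"
          using a(1) trunc_frag[of B \<alpha>' k'] fl by auto
        show "ends_in_len (\<alpha>'\<lparr>flen := enat k'\<rparr>) k' v" by (simp add: ends_in_len_def v_def)
        have "\<forall>i'\<in>Index (step_frag t a s). \<exists>j\<le>k'. (i', j) \<in> I"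
        proof
          fix i' assume "i' \<in> Index (step_frag t a s)"
          then have "i' = 0 \<or> i' = 1" by auto
          then show "\<exists>j\<le>k'. (i', j) \<in> I"
          proof
            assume "i' = 0"
            obtain j where j: "(0,j) \<in> I" using I unfolding index_rel_def by auto
            have "j \<le> k'"
            proof -
              have "\<forall>i j i' j'. (i, j) \<in> I \<and> (i', j') \<in> I \<and> i < i' \<longrightarrow> j \<le> j'"
                using I unfolding index_rel_def by blast
              then show ?thesis using ir_mono[OF I j] i True by simp
            qed
            then show ?thesis using j \<open>i' = 0\<close> by auto
          qed (use i True in auto)
        qed
        then have "index_rel tau b (step_frag t a s) (\<alpha>'\<lparr>flen := enat k'\<rparr>) (I \<inter> (UNIV \<times> {..k'}))"
          by (rule trunc_rel[OF I fl(1)])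
        then show "frag_related tau b (step_frag t a s) (\<alpha>'\<lparr>flen := enat k'\<rparr>)"
          unfolding frag_related_def by blast
      qed
      then have "(LEAST k. P v k) \<le> k'" by (rule Least_le)
      then have "branching_norm tau A B b (Inr (t,a,s)) v < branching_norm tau A B b (Inr (t,a,s)) u"
        using N[OF vb] N[OF u] Suc by simp
      then show ?thesis using vb stp tau by auto
    qed
  qed
qed

theorem mainTheorem9:
  fixes tau :: 'a
    and A :: "('s, 'a) automaton"
    and B :: "('t, 'a) automaton"
  assumes "is_automaton tau A" and "is_automaton tau B"
  shows "(\<forall>b (lt :: 'o \<Rightarrow> 'o \<Rightarrow> bool) n.
            wfP lt \<and> transp lt \<and> normed_bsim tau A B b lt n \<longrightarrow> branching_bsim tau A B b)
       \<and> (\<forall>b. branching_bsim tau A B b \<longrightarrow>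
            normed_bsim tau A B b (<) (branching_norm tau A B b))"
proof (intro conjI allI impI)
  fix b and lt :: "'o \<Rightarrow> 'o \<Rightarrow> bool" and n
  assume h: "wfP lt \<and> transp lt \<and> normed_bsim tau A B b lt n"
  then have wf: "wfP lt" and nb: "normed_bsim tau A B b lt n" by auto
  have tot: "total_rel A B b" using nb unfolding normed_bsim_def by blast
  show "branching_bsim tau A B b"
    unfolding branching_bsim_def
  proof (intro conjI tot ballI allI impI)
    fix s u assume "s \<in> start A" "u \<in> b``{s}"
    then show "\<exists>\<alpha>'. is_exec B \<alpha>' \<and> ends_in \<alpha>' u \<and> frag_related tau b (single_frag tau s) \<alpha>'"
      using part1_start[OF wf nb assms(2)] by blast
  next
    fix t a s u assume "(t, a, s) \<in> steps A \<and> u \<in> b``{s}"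
    then show "\<exists>\<alpha>'. is_frag B \<alpha>' \<and> ends_in \<alpha>' u \<and> frag_related tau b (step_frag t a s) \<alpha>'"
      using part1_step[OF wf nb assms(2)] by blast
  qed
next
  fix b assume h: "branching_bsim tau A B b"
  have tot: "total_rel A B b" using h unfolding branching_bsim_def by blast
  show "normed_bsim tau A B b (<) (branching_norm tau A B b)"
    unfolding normed_bsim_def
  proof (intro conjI tot ballI allI impI)
    fix s u assume "s \<in> start A" "u \<in> b``{s}"
    then show "u \<in> start B \<or> (\<exists>v\<in>b``{s}. (v,tau,u) \<in> steps B \<and>
     branching_norm tau A B b (Inl s) v < branching_norm tau A B b (Inl s) u)"
      by (rule part2_start[OF h])
  next
    fix t a s u assume "(t, a, s) \<in> steps A \<and> u \<in> b``{s}"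
    then show "(u \<in> b `` {t} \<and> a = tau) \<or>
        (\<exists>v \<in> b `` {t}. (v, a, u) \<in> steps B) \<or>
        (\<exists>v \<in> b `` {s}. (v, tau, u) \<in> steps B \<and>
            branching_norm tau A B b (Inr (t, a, s)) v < branching_norm tau A B b (Inr (t, a, s)) u)"
      using part2_step[OF h] by blast
  qed
qed

end
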